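(* Let $d\ge1$, $K>0$, $U$ a non-negative polynomial of degree $4$ with strictly positive leading coefficient, and let $\omega$ be a Borel probability measure on $\mathcal{X}=(\mathbb{R}^2)^{\mathbb{Z}^d}$ for which there is a constant $C_\omega>0$ such that, for all sufficiently small $\lambda>0$, $$\omega\bigl(e^{\lambda W_{\nu,k}}\bigr)\le e^{C_\omega(2k+1)^d}\qquad\forall\,\nu\in\mathbb{Z}^d,\ \forall\,k\in\mathbb{N}.$$ Then, for all sufficiently small $\lambda>0$, $$\lim_{N\to+\infty}e^{\lambda N}\,\omega(Q>N)=0;$$ in particular $\omega(\{x:Q(x)<\infty\})=1$.
   Context: Configurations are $x=\{(q_i,p_i)\}_{i\in\mathbb{Z}^d}$ with the product topology on $\mathcal{X}$; $|i-j|=\sum_\ell|i_\ell-j_\ell|$. For $\nu\in\mathbb{Z}^d$, $k\in\mathbb{N}$, $\Lambda_{\nu,k}$ is the cube of center $\nu$ and side $2k+1$, $W_{\nu,k}(x)=\sum_{i\in\Lambda_{\nu,k}}\{p_i^2/2+U(q_i)+1\}+\sum_{i,j\in\Lambda_{\nu,k},|j-i|=1}\frac K4(q_i-q_j)^2$, and $Q(x)=\sup_{\nu\in\mathbb{Z}^d}\sup_{k\in\mathbb{N},\,k>\log^{1/d}(e+|\nu|)}W_{\nu,k}(x)/(2k+1)^d$. *)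

theory Defs
  imports "HOL-Probability.Probability" "HOL-Computational_Algebra.Polynomial"
begin

text \<open>Sites of the lattice Z^d are vectors int^'d (d = CARD('d) >= 1).
  A configuration x assigns to each site i the pair (q_i, p_i) = x i.\<close>

type_synonym 'd config = "(int^('d::finite)) \<Rightarrow> real \<times> real"

definition l1norm :: "int^('d::finite) \<Rightarrow> int" where
  "l1norm i = (\<Sum>l\<in>UNIV. \<bar>i $ l\<bar>)"

definition cube :: "int^('d::finite) \<Rightarrow> nat \<Rightarrow> (int^'d) set" where
  "cube \<nu> k = {i. \<forall>l. \<bar>i $ l - \<nu> $ l\<bar> \<le> int k}"

definition Wloc :: "real \<Rightarrow> real poly \<Rightarrow> int^('d::finite) \<Rightarrow> nat \<Rightarrow> 'd config \<Rightarrow> real" where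
  "Wloc K U \<nu> k x =
     (\<Sum>i\<in>cube \<nu> k. (snd (x i))\<^sup>2 / 2 + poly U (fst (x i)) + 1)
   + (\<Sum>(i,j)\<in>{(i,j). i \<in> cube \<nu> k \<and> j \<in> cube \<nu> k \<and> l1norm (j - i) = 1}.
        K / 4 * (fst (x i) - fst (x j))\<^sup>2)"

definition Qfun :: "real \<Rightarrow> real poly \<Rightarrow> ('d::finite) config \<Rightarrow> ereal" where
  "Qfun K U x =
     (SUP p \<in> {(\<nu>::int^'d, k::nat).
                 real k > (ln (exp 1 + real_of_int (l1norm \<nu>))) powr (1 / real CARD('d))}.
        ereal (Wloc K U (fst p) (snd p) x / (2 * real (snd p) + 1) ^ CARD('d)))"

end

theory Submission imports Defs begin

lemma box_sub: "{\<nu>::int^('d::finite). \<forall>l. \<bar>\<nu> $ l\<bar> \<le> B} \<subseteq> vec_lambda ` (PiE UNIV (\<lambda>_. {-B..B}))"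
proof
  fix \<nu> :: "int^'d" assume "\<nu> \<in> {\<nu>. \<forall>l. \<bar>\<nu> $ l\<bar> \<le> B}"
  then have "vec_nth \<nu> \<in> PiE UNIV (\<lambda>_. {-B..B})" by (force simp: abs_le_iff)
  then show "\<nu> \<in> vec_lambda ` (PiE UNIV (\<lambda>_. {-B..B}))"
    by (metis image_eqI vec_nth_inverse)
qed

lemma box_finite: "finite {\<nu>::int^('d::finite). \<forall>l. \<bar>\<nu> $ l\<bar> \<le> B}"
  by (rule finite_subset[OF box_sub]) (auto intro!: finite_PiE)

lemma box_card: "B \<ge> 0 \<Longrightarrow> real (card {\<nu>::int^('d::finite). \<forall>l. \<bar>\<nu> $ l\<bar> \<le> B}) \<le> (2 * real_of_int B + 1) ^ CARD('d)"
proof -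
  assume B: "B \<ge> 0"
  have "card {\<nu>::int^('d::finite). \<forall>l. \<bar>\<nu> $ l\<bar> \<le> B} \<le> card (vec_lambda ` (PiE (UNIV::'d set) (\<lambda>_. {-B..B})))"
    by (intro card_mono box_sub) (auto intro!: finite_PiE)
  also have "\<dots> \<le> card (PiE (UNIV::'d set) (\<lambda>_. {-B..B}))" by (rule card_image_le) (auto intro!: finite_PiE)
  also have "\<dots> = nat (2*B+1) ^ CARD('d)" by (simp add: card_PiE)
  finally have "real (card {\<nu>::int^('d::finite). \<forall>l. \<bar>\<nu> $ l\<bar> \<le> B}) \<le> real (nat (2*B+1) ^ CARD('d))"
    by linarith
  also have "\<dots> = (2 * real_of_int B + 1) ^ CARD('d)" using B by simp
  finally show ?thesis .
qed

lemma S_box: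
  fixes \<nu> :: "int^('d::finite)"
  assumes "real k > (ln (exp 1 + real_of_int (l1norm \<nu>))) powr (1 / real CARD('d))"
  shows "\<bar>\<nu> $ l\<bar> \<le> \<lfloor>exp (real k ^ CARD('d))\<rfloor>"
proof -
  let ?d = "CARD('d)"
  have l1: "\<bar>\<nu> $ l\<bar> \<le> l1norm \<nu>" unfolding l1norm_def
    by (rule member_le_sum) auto
  have l0: "l1norm \<nu> \<ge> 0" unfolding l1norm_def by (simp add: sum_nonneg)
  let ?x = "ln (exp 1 + real_of_int (l1norm \<nu>))"
  have xp: "?x > 0" using l0 by (intro ln_gt_zero) (smt (verit) one_less_exp_iff of_int_nonneg)
  have "?x = (?x powr (1 / real ?d)) ^ ?d"
    using xp by (simp add: powr_realpow[symmetric] powr_powr)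
  also have "\<dots> < real k ^ ?d"
    using assms xp by (intro power_strict_mono) auto
  finally have "exp ?x < exp (real k ^ ?d)" by simp
  then have "exp 1 + real_of_int (l1norm \<nu>) < exp (real k ^ ?d)"
    using l0 by (simp add: add_pos_nonneg)
  then have "real_of_int \<bar>\<nu> $ l\<bar> < exp (real k ^ ?d)"
    using l1 by (smt (verit) exp_gt_zero of_int_le_iff)
  then show ?thesis by (simp add: le_floor_iff)
qed

lemma markov_W:
  fixes f :: "'a \<Rightarrow> real"
  assumes fm: "f \<in> borel_measurable \<omega>" and lp: "l > 0" and mp: "(m::real) > 0"
    and ib: "(\<integral>\<^sup>+ x. ennreal (exp (l * f x)) \<partial>\<omega>) \<le> ennreal (exp (C * m))"
  shows "emeasure \<omega> {x\<in>space \<omega>. f x / m > N} \<le> ennreal (exp ((C - l * N) * m))"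
proof -
  let ?A = "{x\<in>space \<omega>. f x / m > N}"
  have Am: "?A \<in> sets \<omega>" using fm by measurable
  have pt: "indicator ?A x \<le> ennreal (exp (l * f x)) * ennreal (exp (- l * N * m))" for x
  proof (cases "x \<in> ?A")
    case True
    then have "f x > N * m" using mp by (simp add: pos_less_divide_eq)
    then have "l * f x > l * (N * m)" using lp by simp
    then have "exp (l * f x) * exp (- l * N * m) \<ge> 1"
      by (simp add: exp_add[symmetric])
    then show ?thesis using True by (simp add: ennreal_mult[symmetric])
  qed simp
  have "emeasure \<omega> ?A = (\<integral>\<^sup>+ x. indicator ?A x \<partial>\<omega>)" using Am by simp
  also have "\<dots> \<le> (\<integral>\<^sup>+ x. ennreal (exp (l * f x)) * ennreal (exp (- l * N * m)) \<partial>\<omega>)"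
    by (intro nn_integral_mono pt)
  also have "\<dots> = (\<integral>\<^sup>+ x. ennreal (exp (l * f x)) \<partial>\<omega>) * ennreal (exp (- l * N * m))"
    by (rule nn_integral_multc) (use fm in measurable)
  also have "\<dots> \<le> ennreal (exp (C * m)) * ennreal (exp (- l * N * m))"
    by (intro mult_right_mono ib) simp
  also have "\<dots> = ennreal (exp ((C - l * N) * m))"
    by (simp add: ennreal_mult[symmetric] exp_add[symmetric] algebra_simps)
  finally show ?thesis .
qed
lemma Wloc_cont: "continuous_on UNIV (Wloc K U \<nu> k :: ('d::finite) config \<Rightarrow> real)"
  unfolding Wloc_def case_prod_unfold
  by (intro continuous_intros continuous_on_compose2[OF continuous_on_product_coordinates] ) auto

lemma Wloc_meas:
  assumes "sets \<omega> = sets (borel :: ('d::finite) config measure)"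
  shows "Wloc K U \<nu> k \<in> borel_measurable \<omega>"
  using borel_measurable_continuous_onI[OF Wloc_cont] measurable_cong_sets[OF assms refl] by blast

lemma term_bound:
  fixes d k :: nat and l N C :: real
  assumes d1: "d \<ge> 1" and Cp: "C > 0" and lN: "l * N \<ge> C + 2 * real d + 1"
    and card: "c \<le> (2 * real_of_int \<lfloor>exp (real k ^ d)\<rfloor> + 1) ^ d"
  shows "c * exp ((C - 2 * l * N) * (2 * real k + 1) ^ d)
         \<le> 3 ^ d * exp (C + 2 * real d + 1 - 2 * l * N) * exp (-1) ^ k"
proof -
  let ?R = "exp (real k ^ d)" and ?m = "(2 * real k + 1) ^ d"
  have R1: "?R \<ge> 1" by simp
  have "2 * real_of_int \<lfloor>?R\<rfloor> + 1 \<le> 3 * ?R" using R1 by linarith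
  moreover have "0 \<le> 2 * real_of_int \<lfloor>?R\<rfloor> + 1" proof -
    have "0 \<le> \<lfloor>?R\<rfloor>" using R1 by simp
    then show ?thesis by linarith
  qed
  ultimately have "(2 * real_of_int \<lfloor>?R\<rfloor> + 1) ^ d \<le> (3 * ?R) ^ d" by (rule power_mono)
  also have "\<dots> = 3 ^ d * exp (real d * real k ^ d)" by (simp add: power_mult_distrib exp_of_nat_mult)
  finally have c1: "c \<le> 3 ^ d * exp (real d * real k ^ d)" using card by linarith
  have m1: "?m \<ge> real k ^ d" by (intro power_mono) auto
  have m2: "?m \<ge> 2 * real k + 1" using d1 by (intro self_le_power) auto
  have m3: "?m \<ge> 1" using m2 by linarith
  have s: "2 * l * N - C \<ge> 2 * real d + 1" using lN Cp by linarith
  have A: "(2 * l * N - C) * (?m - 1) \<ge> (2 * real d + 1) * (?m - 1)"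
    using s m3 by (intro mult_right_mono) auto
  have B: "real d * ?m \<ge> real d * real k ^ d"
    using m1 by (intro mult_left_mono) auto
  have B2: "real d * ?m \<ge> 0" using m3 by simp
  have key: "real d * real k ^ d + (C - 2 * l * N) * ?m \<le> C + 2 * real d + 1 - 2 * l * N - real k"
  proof -
    define x where "x = 2 * l * N - C"
    define D where "D = real d"
    define M where "M = ?m"
    have A': "x * M - x \<ge> (2 * D + 1) * M - (2 * D + 1)" using A unfolding x_def D_def M_def by (simp add: algebra_simps)
    have "(2 * D + 1) * M = D * M + D * M + M" by (simp add: algebra_simps)
    then have "D * real k ^ d - x * M \<le> 2 * D + 1 - x - real k"
      using A' B B2 m2 unfolding D_def M_def by linarith
    moreover have "(C - 2 * l * N) * M = - (x * M)" unfolding x_def by (simp add: algebra_simps)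
    ultimately show ?thesis unfolding x_def D_def M_def by linarith
  qed
  have "c * exp ((C - 2 * l * N) * ?m) \<le> 3 ^ d * exp (real d * real k ^ d) * exp ((C - 2 * l * N) * ?m)"
    using c1 by (intro mult_right_mono) auto
  also have "\<dots> = 3 ^ d * exp (real d * real k ^ d + (C - 2 * l * N) * ?m)" by (simp add: exp_add)
  also have "\<dots> \<le> 3 ^ d * exp (C + 2 * real d + 1 - 2 * l * N - k)" using key by simp
  also have "\<dots> = 3 ^ d * exp (C + 2 * real d + 1 - 2 * l * N) * exp (-1) ^ k"
    by (simp add: exp_diff exp_minus exp_of_nat_mult[symmetric] field_simps exp_add)
  finally show ?thesis .
qed


lemma main_bound:
  fixes \<omega> :: "('d::finite) config measure"
  assumes borel: "sets \<omega> = sets borel" and lp: "l > 0" and Cp: "C > 0"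
    and ib: "\<And>\<nu> k. (\<integral>\<^sup>+ x. ennreal (exp (2 * l * Wloc K U \<nu> k x)) \<partial>\<omega>)
          \<le> ennreal (exp (C * (2 * real k + 1) ^ CARD('d)))"
    and lN: "l * N \<ge> C + 2 * real CARD('d) + 1"
  shows "emeasure \<omega> {x. Qfun K U x > ereal N}
    \<le> ennreal (3 ^ CARD('d) * exp (C + 2 * real CARD('d) + 1 - 2 * l * N) * (1 / (1 - exp (-1))))"
proof -
  define d where "d = CARD('d)"
  have d1: "d \<ge> 1" unfolding d_def by (simp add: Suc_leI)
  define m where "m k = (2 * real k + 1) ^ d" for k :: nat
  define T where "T k = {\<nu>::int^'d. real k > (ln (exp 1 + real_of_int (l1norm \<nu>))) powr (1 / real CARD('d))}" for k :: nat
  define A where "A \<nu> k = {x\<in>space \<omega>. Wloc K U \<nu> k x / m k > N}" for \<nu> k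
  define c where "c = 3 ^ d * exp (C + 2 * real d + 1 - 2 * l * N)"
  have sp: "space \<omega> = UNIV" using sets_eq_imp_space_eq[OF borel] by simp
  have eq: "{x. Qfun K U x > ereal N} = (\<Union>k. \<Union>\<nu>\<in>T k. A \<nu> k)"
    unfolding Qfun_def A_def T_def m_def d_def sp by (auto simp: less_SUP_iff)
  have Am: "A \<nu> k \<in> sets \<omega>" for \<nu> k
    unfolding A_def using Wloc_meas[OF borel] by measurable
  have Tsub: "T k \<subseteq> {\<nu>::int^'d. \<forall>l. \<bar>\<nu> $ l\<bar> \<le> \<lfloor>exp (real k ^ d)\<rfloor>}" for k
    unfolding T_def d_def using S_box by blast
  have Tfin: "finite (T k)" for k by (rule finite_subset[OF Tsub box_finite])
  have Tcard: "real (card (T k)) \<le> (2 * real_of_int \<lfloor>exp (real k ^ d)\<rfloor> + 1) ^ d" for k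
  proof -
    have "card (T k) \<le> card {\<nu>::int^'d. \<forall>l. \<bar>\<nu> $ l\<bar> \<le> \<lfloor>exp (real k ^ d)\<rfloor>}"
      by (intro card_mono Tsub box_finite)
    then have "real (card (T k)) \<le> real (card {\<nu>::int^'d. \<forall>l. \<bar>\<nu> $ l\<bar> \<le> \<lfloor>exp (real k ^ d)\<rfloor>})"
      by simp
    moreover have "0 \<le> \<lfloor>exp (real k ^ d)\<rfloor>" by simp
    ultimately show ?thesis using box_card[of "\<lfloor>exp (real k ^ d)\<rfloor>", where 'd='d] unfolding d_def
      by linarith
  qed
  have bk: "emeasure \<omega> (\<Union>\<nu>\<in>T k. A \<nu> k) \<le> ennreal (c * exp (-1) ^ k)" for k
  proof -
    have "emeasure \<omega> (\<Union>\<nu>\<in>T k. A \<nu> k) \<le> (\<Sum>\<nu>\<in>T k. emeasure \<omega> (A \<nu> k))"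
      using Tfin Am by (intro emeasure_subadditive_finite) auto
    also have "\<dots> \<le> (\<Sum>\<nu>\<in>T k. ennreal (exp ((C - 2 * l * N) * m k)))"
    proof (intro sum_mono)
      fix \<nu> assume "\<nu> \<in> T k"
      have "m k > 0" unfolding m_def by simp
      then show "emeasure \<omega> (A \<nu> k) \<le> ennreal (exp ((C - 2 * l * N) * m k))"
        unfolding A_def using markov_W[OF Wloc_meas[OF borel], of "2 * l" "m k" K U \<nu> k C N] lp ib
        unfolding m_def d_def by (simp add: mult.assoc)
    qed
    also have "\<dots> = ennreal (real (card (T k)) * exp ((C - 2 * l * N) * m k))"
      by (simp add: ennreal_of_nat_eq_real_of_nat ennreal_mult)
    also have "\<dots> \<le> ennreal (c * exp (-1) ^ k)"
    proof (rule ennreal_leI)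
      have lN': "l * N \<ge> C + 2 * real d + 1" using lN by (simp add: d_def)
      show "real (card (T k)) * exp ((C - 2 * l * N) * m k) \<le> c * exp (-1) ^ k"
        unfolding c_def m_def by (rule term_bound[OF d1 Cp lN' Tcard])
    qed
    finally show ?thesis .
  qed
  have "emeasure \<omega> {x. Qfun K U x > ereal N} \<le> (\<Sum>k. emeasure \<omega> (\<Union>\<nu>\<in>T k. A \<nu> k))"
    unfolding eq using Am Tfin by (intro emeasure_subadditive_countably) auto
  also have "\<dots> \<le> (\<Sum>k. ennreal (c * exp (-1) ^ k))"
    by (intro suminf_le bk) auto
  also have "\<dots> = ennreal (\<Sum>k. c * exp (-1) ^ k)"
    by (intro suminf_ennreal2 summable_mult summable_geometric) (auto simp: c_def)
  also have "(\<Sum>k. c * exp (-1) ^ k) = c * (1 / (1 - exp (-1)))"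
    by (subst suminf_mult) (auto intro!: summable_geometric simp: suminf_geometric)
  finally show ?thesis unfolding c_def d_def .
qed


lemma Q_meas:
  fixes \<omega> :: "('d::finite) config measure"
  assumes borel: "sets \<omega> = sets borel"
  shows "{x. Qfun K U x > ereal N} \<in> sets \<omega>"
proof -
  define m where "m k = (2 * real k + 1) ^ CARD('d)" for k :: nat
  define T where "T k = {\<nu>::int^'d. real k > (ln (exp 1 + real_of_int (l1norm \<nu>))) powr (1 / real CARD('d))}" for k :: nat
  define A where "A \<nu> k = {x\<in>space \<omega>. Wloc K U \<nu> k x / m k > N}" for \<nu> k
  have sp: "space \<omega> = UNIV" using sets_eq_imp_space_eq[OF borel] by simp
  have eq: "{x. Qfun K U x > ereal N} = (\<Union>k. \<Union>\<nu>\<in>T k. A \<nu> k)"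
    unfolding Qfun_def A_def T_def m_def sp by (auto simp: less_SUP_iff)
  have Am: "A \<nu> k \<in> sets \<omega>" for \<nu> k
    unfolding A_def using Wloc_meas[OF borel] by measurable
  have Tfin: "finite (T k)" for k
    by (rule finite_subset[OF _ box_finite]) (use S_box in \<open>auto simp: T_def\<close>)
  show ?thesis unfolding eq using Am Tfin by auto
qed

lemma exp_decay:
  assumes "l > 0"
  shows "((\<lambda>N::real. a * exp (b - l * N)) \<longlongrightarrow> 0) at_top"
proof -
  have 1: "filterlim (\<lambda>N::real. l * N) at_top at_top"
    using filterlim_tendsto_pos_mult_at_top[OF tendsto_const assms filterlim_ident] by simp
  have 2: "filterlim (\<lambda>N::real. (- b) + l * N) at_top at_top"
    by (rule filterlim_tendsto_add_at_top[OF tendsto_const 1])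
  have 3: "filterlim (\<lambda>N::real. b - l * N) at_bot at_top"
    using 2 by (simp add: filterlim_uminus_at_bot algebra_simps)
  have "((\<lambda>N::real. exp (b - l * N)) \<longlongrightarrow> 0) at_top"
    using filterlim_compose[OF exp_at_bot 3] by (simp add: o_def)
  then show ?thesis using tendsto_mult_right_zero by blast
qed

theorem mainTheorem5:
  fixes K :: real and U :: "real poly" and \<omega> :: "('d::finite) config measure"
  assumes K_pos: "K > 0"
    and U_deg: "degree U = 4" and U_lead: "lead_coeff U > 0"
    and U_nonneg: "\<And>y. poly U y \<ge> 0"
    and prob: "prob_space \<omega>" and borel: "sets \<omega> = sets borel"
    and expbound: "\<exists>C>0. \<forall>\<^sub>F l in at_right (0::real). \<forall>\<nu> k.
        (\<integral>\<^sup>+ x. ennreal (exp (l * Wloc K U \<nu> k x)) \<partial>\<omega>)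
          \<le> ennreal (exp (C * (2 * real k + 1) ^ CARD('d)))"
  shows "(\<forall>\<^sub>F l in at_right (0::real).
           ((\<lambda>N. exp (l * N) * measure \<omega> {x. Qfun K U x > ereal N}) \<longlongrightarrow> 0) at_top)
         \<and> measure \<omega> {x. Qfun K U x < \<infinity>} = 1"
proof -
  interpret P: prob_space \<omega> by (rule prob)
  obtain C where Cp: "C > 0" and ev: "\<forall>\<^sub>F l in at_right (0::real). \<forall>\<nu> k.
        (\<integral>\<^sup>+ x. ennreal (exp (l * Wloc K U \<nu> k x)) \<partial>\<omega>)
          \<le> ennreal (exp (C * (2 * real k + 1) ^ CARD('d)))"
    using expbound by blast
  then obtain b where bp: "b > 0" and bb: "\<And>y. 0 < y \<Longrightarrow> y < b \<Longrightarrow> \<forall>\<nu> k.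
        (\<integral>\<^sup>+ x. ennreal (exp (y * Wloc K U \<nu> k x)) \<partial>\<omega>)
          \<le> ennreal (exp (C * (2 * real k + 1) ^ CARD('d)))"
    using ev unfolding eventually_at_right_field by blast
  define G where "G = 3 ^ CARD('d) * (1 / (1 - exp (-1::real)))"
  have lim: "((\<lambda>N. exp (l * N) * measure \<omega> {x. Qfun K U x > ereal N}) \<longlongrightarrow> 0) at_top"
    if l0: "0 < l" and lb: "l < b / 2" for l
  proof (rule tendsto_sandwich)
    show "\<forall>\<^sub>F N in at_top. 0 \<le> exp (l * N) * measure \<omega> {x. Qfun K U x > ereal N}" by simp
    show "((\<lambda>N. 0) \<longlongrightarrow> (0::real)) at_top" by simp
    show "((\<lambda>N. G * exp (C + 2 * real CARD('d) + 1 - l * N)) \<longlongrightarrow> 0) at_top"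
      using exp_decay[OF l0] by blast
    have ib: "\<And>\<nu> k. (\<integral>\<^sup>+ x. ennreal (exp (2 * l * Wloc K U \<nu> k x)) \<partial>\<omega>)
          \<le> ennreal (exp (C * (2 * real k + 1) ^ CARD('d)))"
      using bb[of "2 * l"] l0 lb by auto
    show "\<forall>\<^sub>F N in at_top. exp (l * N) * measure \<omega> {x. Qfun K U x > ereal N}
            \<le> G * exp (C + 2 * real CARD('d) + 1 - l * N)"
    proof (rule eventually_at_top_linorderI[of "(C + 2 * real CARD('d) + 1) / l"])
      fix N assume "N \<ge> (C + 2 * real CARD('d) + 1) / l"
      then have lN: "l * N \<ge> C + 2 * real CARD('d) + 1" using l0 by (simp add: field_simps)
      have e: "emeasure \<omega> {x. Qfun K U x > ereal N}
          \<le> ennreal (3 ^ CARD('d) * exp (C + 2 * real CARD('d) + 1 - 2 * l * N) * (1 / (1 - exp (-1))))"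
        by (rule main_bound[OF borel l0 Cp ib lN])
      have "measure \<omega> {x. Qfun K U x > ereal N}
          \<le> 3 ^ CARD('d) * exp (C + 2 * real CARD('d) + 1 - 2 * l * N) * (1 / (1 - exp (-1)))"
        unfolding measure_def using enn2real_mono[OF e] by simp
      then have "exp (l * N) * measure \<omega> {x. Qfun K U x > ereal N}
          \<le> exp (l * N) * (3 ^ CARD('d) * exp (C + 2 * real CARD('d) + 1 - 2 * l * N) * (1 / (1 - exp (-1))))"
        by (intro mult_left_mono) auto
      also have "\<dots> = G * exp (C + 2 * real CARD('d) + 1 - l * N)"
        unfolding G_def by (simp add: exp_add[symmetric] algebra_simps)
      finally show "exp (l * N) * measure \<omega> {x. Qfun K U x > ereal N}
            \<le> G * exp (C + 2 * real CARD('d) + 1 - l * N)" .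
    qed
  qed
  have part1: "\<forall>\<^sub>F l in at_right (0::real).
           ((\<lambda>N. exp (l * N) * measure \<omega> {x. Qfun K U x > ereal N}) \<longlongrightarrow> 0) at_top"
    unfolding eventually_at_right_field
    by (intro exI[of _ "b / 2"]) (use bp lim in auto)
  define l0 where "l0 = b / 4"
  have l0p: "0 < l0" "l0 < b / 2" using bp by (auto simp: l0_def)
  define g where "g N = exp (l0 * N) * measure \<omega> {x. Qfun K U x > ereal N}" for N
  have gl: "(\<lambda>n::nat. g (real n)) \<longlonglongrightarrow> 0"
    using filterlim_compose[OF lim[OF l0p] filterlim_real_sequentially] unfolding g_def o_def by simp
  define I where "I = (\<Inter>n::nat. {x::int^'d \<Rightarrow> real \<times> real. Qfun K U x > ereal (real n)})"
  have Im: "I \<in> sets \<omega>" unfolding I_def using Q_meas[OF borel] by auto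
  have Ile: "measure \<omega> I \<le> g (real n)" for n
  proof -
    have "measure \<omega> I \<le> measure \<omega> {x. Qfun K U x > ereal (real n)}"
      using Q_meas[OF borel] by (intro P.finite_measure_mono) (auto simp: I_def)
    also have "\<dots> \<le> g (real n)" unfolding g_def
    proof -
      have "1 \<le> exp (l0 * real n)" using l0p by simp
      from mult_right_mono[OF this measure_nonneg]
      show "measure \<omega> {x. Qfun K U x > ereal (real n)} \<le> exp (l0 * real n) * measure \<omega> {x. Qfun K U x > ereal (real n)}"
        by simp
    qed
    finally show ?thesis .
  qed
  have I0: "measure \<omega> I = 0"
  proof -
    have "measure \<omega> I \<le> 0" by (rule LIMSEQ_le_const[OF gl]) (use Ile in auto)
    then show ?thesis by (simp add: measure_nonneg antisym)
  qed
  have Ieq: "{x. Qfun K U x < \<infinity>} = space \<omega> - I"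
  proof -
    have sp: "space \<omega> = UNIV" using sets_eq_imp_space_eq[OF borel] by simp
    have "Qfun K U x < \<infinity> \<longleftrightarrow> (\<exists>n::nat. \<not> Qfun K U x > ereal (real n))" for x
    proof
      assume "Qfun K U x < \<infinity>"
      then show "\<exists>n::nat. \<not> Qfun K U x > ereal (real n)"
      proof (cases "Qfun K U x")
        case (real r)
        obtain n :: nat where "r < real n" using reals_Archimedean2 by blast
        then show ?thesis using real by (intro exI[of _ n]) auto
      qed auto
    next
      assume "\<exists>n::nat. \<not> Qfun K U x > ereal (real n)"
      then show "Qfun K U x < \<infinity>" by auto
    qed
    then show ?thesis unfolding I_def sp by auto
  qed
  have part2: "measure \<omega> {x. Qfun K U x < \<infinity>} = 1"
    unfolding Ieq using P.prob_compl[OF Im] I0 by simp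
  show ?thesis using part1 part2 by blast
qed

end
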